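(* Let $d$ be an integer and $x$ a real number with $0<d\leqslant x/2$, and let $K_d$ be the largest integer $k$ such that $(k-d)k\leqslant dx$ (i.e. $K_d=\lfloor (d+\sqrt{d^2+4dx})/2\rfloor$). Then for every integer $k$ with $K_d-d<k\leqslant K_d$, $$d\lfloor x/k \rfloor +\frac{x}{\lfloor x/k \rfloor}=2\sqrt{dx}+O\bigl(d^{3/2}x^{-1/2}\bigr),$$ with an absolute implied constant.
   Context: $\lfloor t\rfloor$ denotes the integer part of the real number $t$. *)

theory Defs
  imports Complex_Main
begin

definition Kd :: "int \<Rightarrow> real \<Rightarrow> int" where
  "Kd d x = (GREATEST k::int. real_of_int ((k - d) * k) \<le> real_of_int d * x)"

end

theory Submission
  imports Defs
begin

lemma key:
  fixes D x kk :: real and m :: int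
  assumes D: "D \<ge> 1" and Dx: "2 * D \<le> x" and k1: "(kk - D) * kk \<le> D * x"
    and k2: "kk * (kk + D) > D * x" and kpos: "kk > 0" and kx: "kk \<le> x"
    and md: "m = \<lfloor>x / kk\<rfloor>"
  shows "\<bar>D * m + x / m - 2 * sqrt (D * x)\<bar> \<le> 16 * D powr (3/2) * x powr (-1/2)"
proof -
  define s where "s = sqrt (D * x)"
  have xpos: "x > 0" using D Dx by linarith
  have s2: "s * s = D * x" unfolding s_def using D xpos by simp
  have spos: "s > 0" unfolding s_def using D xpos by simp
  have sD: "s \<ge> D"
  proof -
    have "D * D \<le> D * x" using D Dx by (intro mult_left_mono) auto
    then show ?thesis unfolding s_def by (intro real_le_rsqrt) (simp add: power2_eq_square)
  qed
  have kup: "kk \<le> s + D"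
  proof (rule ccontr)
    assume "\<not> ?thesis"
    then have "kk - D > s" by simp
    then have "(kk - D) * kk > s * s" using spos D by (intro mult_strict_mono) auto
    then show False using s2 k1 by linarith
  qed
  have klo: "kk > s - D/2"
  proof (rule ccontr)
    assume "\<not> ?thesis"
    then have a: "kk \<le> s - D/2" by simp
    have "kk * (kk + D) \<le> (s - D/2) * (s + D/2)" using a kpos D by (intro mult_mono) auto
    also have "\<dots> = s*s - D*D/4" by (simp add: algebra_simps)
    moreover have "D*D > 0" using D by simp
    ultimately show False using s2 k2 by linarith
  qed
  define y where "y = x / s"
  have ys: "y * s = x" unfolding y_def using spos by simp
  have Dy: "D * y = s" unfolding y_def using spos s2
    by (metis nonzero_mult_div_cancel_right times_divide_eq_right less_irrefl)
  have ypos: "y > 0" unfolding y_def using spos xpos by simp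
  have u1: "x / kk < y + 1"
  proof -
    have a: "(y+1) * kk > (y+1) * (s - D/2)" using klo ypos by (intro mult_strict_left_mono) auto
    have b: "(y+1) * (s - D/2) = y*s + s - (D*y)/2 - D/2" by (simp add: algebra_simps)
    have "x < (y+1) * kk" using a b ys Dy sD by linarith
    then show ?thesis using kpos by (simp add: divide_less_eq)
  qed
  have l1: "x / kk \<ge> y - 1"
  proof -
    have "(y - 1) * kk \<le> x"
    proof (cases "y \<ge> 1")
      case True
      have "(y-1) * kk \<le> (y-1) * (s + D)" using kup True by (intro mult_left_mono) auto
      also have "\<dots> = y*s + D*y - s - D" by (simp add: algebra_simps)
      finally show ?thesis using ys Dy D by linarith
    next
      case False
      then have "(y-1) * kk \<le> 0" using kpos by (simp add: mult_nonpos_nonneg)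
      then show ?thesis using xpos by linarith
    qed
    then show ?thesis using kpos by (simp add: le_divide_eq)
  qed
  have m1: "real_of_int m \<le> x / kk" "real_of_int m > x / kk - 1" unfolding md by linarith+
  have mge1: "m \<ge> 1" unfolding md using kx kpos by simp
  define M where "M = real_of_int m"
  have Mpos: "M \<ge> 1" unfolding M_def using mge1 by simp
  have My: "M \<ge> y / 4"
  proof (cases "y \<ge> 4")
    case True then show ?thesis using m1 l1 unfolding M_def by linarith
  next
    case False then show ?thesis using Mpos by linarith
  qed
  have sq: "(M - y)^2 \<le> 4"
  proof -
    have "M - y < 1" "M - y > -2" using m1 l1 u1 unfolding M_def by linarith+
    then have "\<bar>M - y\<bar> \<le> \<bar>2\<bar>" by simp
    then show ?thesis using abs_le_square_iff[of "M - y" 2] by simp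
  qed
  have feq: "D * M + x / M - 2 * s = D * (M - y)^2 / M"
  proof -
    have "D * (M - y)^2 / M = (D*M*M - 2*(D*y)*M + (D*y)*y) / M" by (simp add: power2_eq_square algebra_simps)
    also have "\<dots> = (D*M*M - 2*s*M + x) / M" using Dy ys by (simp add: mult.commute)
    also have "\<dots> = D*M + x/M - 2*s" using Mpos by (simp add: field_simps)
    finally show ?thesis by simp
  qed
  have fnn: "D * (M - y)^2 / M \<ge> 0" using D Mpos by simp
  have "D * (M - y)^2 / M \<le> D * 4 / M" using sq D Mpos by (intro divide_right_mono mult_left_mono) auto
  also have "\<dots> \<le> D * 4 / (y/4)" using My ypos D by (intro divide_left_mono) auto
  also have "\<dots> = 16 * (D * s / x)" using ys ypos spos xpos by (simp add: field_simps)
  also have "D * s / x = D powr (3/2) * x powr (-1/2)"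
  proof -
    have "D powr (3/2) = D powr (1 + 1/2)" by simp
    also have "\<dots> = D powr 1 * D powr (1/2)" by (rule powr_add)
    also have "\<dots> = D * sqrt D" using D by (simp add: powr_half_sqrt)
    finally have a: "D powr (3/2) = D * sqrt D" .
    have b: "x powr (-1/2) = 1 / sqrt x" using xpos
      by (simp add: powr_minus_divide powr_half_sqrt)
    have c: "s = sqrt D * sqrt x" unfolding s_def by (simp add: real_sqrt_mult)
    have d: "x = sqrt x * sqrt x" using xpos by simp
    show ?thesis unfolding a b c using xpos by (subst d) (simp add: field_simps)
  qed
  finally have "D * (M - y)^2 / M \<le> 16 * (D powr (3/2) * x powr (-1/2))" .
  then show ?thesis using feq fnn unfolding M_def s_def by simp
qed


lemma Kd_props:
  fixes d :: int and x :: real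
  assumes d: "0 < d" and dx: "real_of_int d \<le> x / 2"
  shows "real_of_int ((Kd d x - d) * Kd d x) \<le> real_of_int d * x"
    and "\<And>k. real_of_int ((k - d) * k) \<le> real_of_int d * x \<Longrightarrow> k \<le> Kd d x"
proof -
  define P where "P = (\<lambda>k::int. real_of_int ((k - d) * k) \<le> real_of_int d * x)"
  define N where "N = \<lceil>real_of_int d * x\<rceil> + d + 1"
  have xpos: "x > 0" using d dx by linarith
  have sub: "{k. P k} \<subseteq> {-N..N}"
  proof
    fix k assume "k \<in> {k. P k}"
    then have Pk: "real_of_int ((k - d) * k) \<le> real_of_int d * x" unfolding P_def by simp
    have c: "real_of_int d * x \<le> real_of_int \<lceil>real_of_int d * x\<rceil>" by linarith
    have c0: "0 \<le> \<lceil>real_of_int d * x\<rceil>"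
    proof -
      have "0 \<le> real_of_int d * x" using d xpos by simp
      then show ?thesis by linarith
    qed
    have "k \<le> N"
    proof (rule ccontr)
      assume "\<not> k \<le> N"
      then have "k - d > \<lceil>real_of_int d * x\<rceil> + 1" "k \<ge> 1" using d c0 \<open>\<not> k \<le> N\<close> unfolding N_def
        by linarith+
      moreover have "k - d \<ge> 0" using c0 \<open>k - d > _\<close> by linarith
      ultimately have "(k - d) * k \<ge> (k - d)" using mult_left_mono[of 1 k "k-d"] by simp
      then have "(k - d) * k > \<lceil>real_of_int d * x\<rceil>"
        using \<open>k - d > _\<close> by linarith
      then have "real_of_int ((k - d) * k) > real_of_int \<lceil>real_of_int d * x\<rceil>"
        by (simp only: of_int_less_iff)
      then show False using Pk c by linarith
    qed
    moreover have "k \<ge> -N"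
    proof (rule ccontr)
      assume "\<not> k \<ge> -N"
      then have a: "-k > \<lceil>real_of_int d * x\<rceil> + d + 1" unfolding N_def by simp
      have g1: "d - k \<ge> 1" "-k \<ge> 0" using a d c0 by linarith+
      have "(k - d) * k = (d - k) * (-k)" by (simp add: algebra_simps)
      also have "\<dots> \<ge> 1 * (-k)" using g1 by (intro mult_right_mono) auto
      finally have "(k - d) * k > \<lceil>real_of_int d * x\<rceil>" using a d by linarith
      then have "real_of_int ((k - d) * k) > real_of_int \<lceil>real_of_int d * x\<rceil>"
        by (simp only: of_int_less_iff)
      then show False using Pk c by linarith
    qed
    ultimately show "k \<in> {-N..N}" by simp
  qed
  have fin: "finite {k. P k}" using sub finite_subset by blast
  have ex: "\<exists>k. P k" unfolding P_def by (rule exI[of _ 0]) (simp add: d xpos less_imp_le)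
  have eq: "Kd d x = Max {k. P k}" unfolding Kd_def P_def[symmetric] by (rule Greatest_Max[OF fin ex])
  have "Max {k. P k} \<in> {k. P k}" using fin ex by (intro Max_in) auto
  then show "real_of_int ((Kd d x - d) * Kd d x) \<le> real_of_int d * x" using eq unfolding P_def by simp
  fix k assume "real_of_int ((k - d) * k) \<le> real_of_int d * x"
  then have "k \<in> {k. P k}" unfolding P_def by simp
  then show "k \<le> Kd d x" using eq fin by simp
qed

theorem proposition5:
  shows "\<exists>C::real. \<forall>(d::int) (x::real) (k::int).
    0 < d \<and> real_of_int d \<le> x / 2 \<and> Kd d x - d < k \<and> k \<le> Kd d x \<longrightarrow>
    \<bar>real_of_int d * real_of_int \<lfloor>x / real_of_int k\<rfloor> + x / real_of_int \<lfloor>x / real_of_int k\<rfloor>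
       - 2 * sqrt (real_of_int d * x)\<bar>
      \<le> C * real_of_int d powr (3/2) * x powr (-1/2)"
proof (intro exI allI impI)
  fix d :: int and x :: real and k :: int
  assume h: "0 < d \<and> real_of_int d \<le> x / 2 \<and> Kd d x - d < k \<and> k \<le> Kd d x"
  then have d: "0 < d" and dx: "real_of_int d \<le> x / 2" and kl: "Kd d x - d < k" and ku: "k \<le> Kd d x"
    by auto
  define K where "K = Kd d x"
  have PK: "real_of_int ((K - d) * K) \<le> real_of_int d * x" using Kd_props(1)[OF d dx] K_def by simp
  have Kmax: "\<And>k. real_of_int ((k - d) * k) \<le> real_of_int d * x \<Longrightarrow> k \<le> K"
    using Kd_props(2)[OF d dx] K_def by simp
  have "real_of_int ((2*d - d) * (2*d)) \<le> real_of_int d * x"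
  proof -
    have "real_of_int ((2*d - d) * (2*d)) = real_of_int d * (2 * real_of_int d)" by simp
    also have "\<dots> \<le> real_of_int d * x" using d dx by (intro mult_left_mono) auto
    finally show ?thesis .
  qed
  then have K2d: "K \<ge> 2*d" using Kmax by blast
  have kd: "k > d" using kl K2d K_def by simp
  have kK: "k \<le> K" using ku K_def by simp
  have k1: "(k - d) * k \<le> (K - d) * K"
  proof -
    have "(K - d) * K - (k - d) * k = (K - k) * (K + k - d)" by (simp add: algebra_simps)
    also have "\<dots> \<ge> 0" using kK kd d by (intro mult_nonneg_nonneg) auto
    finally show ?thesis by simp
  qed
  have k2: "\<not> (k + d) \<le> K" using kl K_def by simp
  then have k2': "real_of_int ((k + d - d) * (k + d)) > real_of_int d * x" using Kmax by force
  have "real_of_int (d * K) \<le> real_of_int ((K - d) * K)"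
    using K2d d by (subst of_int_le_iff, intro mult_right_mono) auto
  then have "real_of_int d * real_of_int K \<le> real_of_int d * x" using PK by simp
  then have Kx: "real_of_int K \<le> x" using d by simp
  show "\<bar>real_of_int d * real_of_int \<lfloor>x / real_of_int k\<rfloor> + x / real_of_int \<lfloor>x / real_of_int k\<rfloor>
       - 2 * sqrt (real_of_int d * x)\<bar> \<le> 16 * real_of_int d powr (3/2) * x powr (-1/2)"
  proof (rule key)
    show "1 \<le> real_of_int d" using d by simp
    show "2 * real_of_int d \<le> x" using dx by simp
    show "(real_of_int k - real_of_int d) * real_of_int k \<le> real_of_int d * x"
      using k1 PK by (metis of_int_diff of_int_le_iff of_int_mult order_trans)
    show "real_of_int d * x < real_of_int k * (real_of_int k + real_of_int d)"
      using k2' by (simp add: algebra_simps)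
    show "0 < real_of_int k" using kd d by simp
    show "real_of_int k \<le> x" using kK Kx by linarith
  qed simp
qed

end
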